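(* Let $\{\varphi_n\}_{n\ge1}$ be an orthonormal system on $[0,1]$ and let $\{d_n\}$ be a sequence of real numbers with $d_n=O\!\left(\frac{\sqrt{n}}{\log^2(n+1)}\right)$. For a real sequence $b=\{b_n\}\in \ell_2$ put $$Q_n(d,b,x)=\sum_{k=1}^{n} d_k b_k \log k\,\varphi_k(x),\qquad B_n(d,b)=\max_{1\le i<n}\left|\int_0^{i/n}Q_n(d,b,x)\,dx\right|,\qquad U_n(f)=\int_0^1 f(x)Q_n(d,b,x)\,dx.$$ If for some $b\in\ell_2$ one has $\limsup_{n\to\infty}B_n(d,b)=+\infty$, then there exists a function $g\in A$ such that $\limsup_{n\to\infty}|U_n(g)|=+\infty$.
   Context: $A$ denotes the Banach space of absolutely continuous functions on $[0,1]$ with norm $\|f\|_A=\|f\|_C+\int_0^1|f'(x)|\,dx$, where $\|f\|_C=\max_{x\in[0,1]}|f(x)|$. An orthonormal system on $[0,1]$ is a sequence of functions orthonormal in $L_2(0,1)$. $\log$ denotes the logarithm (so $\log 1=0$). *)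

theory Defs
  imports "HOL-Analysis.Analysis"
begin

definition abs_cont_on :: "real \<Rightarrow> real \<Rightarrow> (real \<Rightarrow> real) \<Rightarrow> bool" where
  "abs_cont_on c d f \<longleftrightarrow>
     (\<forall>\<epsilon>>0. \<exists>\<delta>>0. \<forall>(n::nat) (a::nat \<Rightarrow> real) (b::nat \<Rightarrow> real).
        (\<forall>k<n. c \<le> a k \<and> a k \<le> b k \<and> b k \<le> d) \<and>
        (\<forall>k<n. \<forall>j<n. k \<noteq> j \<longrightarrow> b k \<le> a j \<or> b j \<le> a k) \<and>
        (\<Sum>k<n. b k - a k) < \<delta>
        \<longrightarrow> (\<Sum>k<n. \<bar>f (b k) - f (a k)\<bar>) < \<epsilon>)"

definition orthonormal_system :: "(nat \<Rightarrow> real \<Rightarrow> real) \<Rightarrow> bool" where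
  "orthonormal_system \<phi> \<longleftrightarrow>
     (\<forall>n\<ge>1. \<phi> n \<in> borel_measurable (lebesgue_on {0..1})) \<and>
     (\<forall>i\<ge>1. \<forall>j\<ge>1. integrable (lebesgue_on {0..1}) (\<lambda>x. \<phi> i x * \<phi> j x) \<and>
        integral\<^sup>L (lebesgue_on {0..1}) (\<lambda>x. \<phi> i x * \<phi> j x) = (if i = j then 1 else 0))"

definition Qn :: "(nat \<Rightarrow> real) \<Rightarrow> (nat \<Rightarrow> real) \<Rightarrow> (nat \<Rightarrow> real \<Rightarrow> real) \<Rightarrow> nat \<Rightarrow> real \<Rightarrow> real" where
  "Qn d b \<phi> n x = (\<Sum>k=1..n. d k * b k * ln (real k) * \<phi> k x)"

text \<open>B_n = max over 1 <= i < n; for n < 2 the index set is empty and we put 0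
  (irrelevant for the limsup).\<close>
definition Bn :: "(nat \<Rightarrow> real) \<Rightarrow> (nat \<Rightarrow> real) \<Rightarrow> (nat \<Rightarrow> real \<Rightarrow> real) \<Rightarrow> nat \<Rightarrow> real" where
  "Bn d b \<phi> n = (if n < 2 then 0 else
     Max ((\<lambda>i. \<bar>integral\<^sup>L (lebesgue_on {0..real i / real n}) (Qn d b \<phi> n)\<bar>) ` {1..<n}))"

definition Un_op :: "(nat \<Rightarrow> real) \<Rightarrow> (nat \<Rightarrow> real) \<Rightarrow> (nat \<Rightarrow> real \<Rightarrow> real) \<Rightarrow> nat \<Rightarrow> (real \<Rightarrow> real) \<Rightarrow> real" where
  "Un_op d b \<phi> n f = integral\<^sup>L (lebesgue_on {0..1}) (\<lambda>x. f x * Qn d b \<phi> n x)"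

end

theory Submission
  imports Defs
begin


definition clampf :: "real \<Rightarrow> real \<Rightarrow> real \<Rightarrow> real" where
  "clampf t e x = min (max x t) (t + e)"

definition Hf :: "real \<Rightarrow> real \<Rightarrow> real \<Rightarrow> real" where
  "Hf t e x = 1 - (clampf t e x - t) / e"

lemma clamp_meas:
  assumes "a \<le> b" "0 < e"
  shows "clampf t e b - clampf t e a = measure lborel ({a<..b} \<inter> {t<..t+e})"
proof -
  have eq: "{a<..b} \<inter> {t<..t+e} = {max a t<..min b (t+e)}" by auto
  show ?thesis
  proof (cases "max a t \<le> min b (t+e)")
    case True
    then show ?thesis unfolding eq using assms by (auto simp add: clampf_def min_def max_def split: if_splits)
  next
    case False
    then have E0: "{max a t<..min b (t+e)} = {}" by auto
    have "clampf t e b = clampf t e a"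
    proof (cases "t + e < a")
      case True
      then show ?thesis using assms by (simp add: clampf_def)
    next
      case F2: False
      have "b < t"
      proof (rule ccontr)
        assume "\<not> b < t"
        then have "max a t \<le> min b (t+e)" using F2 assms by simp
        then show False using False by simp
      qed
      then show ?thesis using assms by (simp add: clampf_def)
    qed
    then show ?thesis unfolding eq E0 by simp
  qed
qed

lemma var_bound:
  fixes a b :: "nat \<Rightarrow> real"
  assumes e: "0 < e"
    and ab: "\<forall>k<n. a k \<le> b k"
    and no: "\<forall>k<n. \<forall>j<n. k \<noteq> j \<longrightarrow> b k \<le> a j \<or> b j \<le> a k"
  shows "(\<Sum>k<n. \<bar>Hf t e (b k) - Hf t e (a k)\<bar>) \<le> 1"
proof -
  define I where "I k = {a k<..b k} \<inter> {t<..t+e}" for k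
  have mono: "clampf t e x \<le> clampf t e y" if "x \<le> y" for x y
    using that by (simp add: clampf_def min_def max_def)
  have "\<bar>Hf t e (b k) - Hf t e (a k)\<bar> = measure lborel (I k) / e" if "k < n" for k
  proof -
    have "Hf t e (b k) - Hf t e (a k) = - (clampf t e (b k) - clampf t e (a k)) / e"
      unfolding Hf_def using e by (simp add: field_simps)
    moreover have "clampf t e (b k) - clampf t e (a k) \<ge> 0" using mono ab that by auto
    ultimately show ?thesis using clamp_meas[OF _ e, of "a k" "b k" t] ab that e
      unfolding I_def by (simp add: abs_minus_commute)
  qed
  then have "(\<Sum>k<n. \<bar>Hf t e (b k) - Hf t e (a k)\<bar>) = (\<Sum>k<n. measure lborel (I k)) / e"
    by (simp add: sum_divide_distrib)
  also have "(\<Sum>k<n. measure lborel (I k)) = measure lborel (\<Union>k\<in>{..<n}. I k)"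
  proof (rule measure_finite_Union[symmetric])
    show "disjoint_family_on I {..<n}"
      unfolding disjoint_family_on_def I_def
    proof (intro ballI impI)
      fix k j assume "k \<in> {..<n}" "j \<in> {..<n}" "k \<noteq> j"
      then have "b k \<le> a j \<or> b j \<le> a k" using no by auto
      then show "{a k<..b k} \<inter> {t<..t + e} \<inter> ({a j<..b j} \<inter> {t<..t + e}) = {}" by auto
    qed
    show "\<And>i. i \<in> {..<n} \<Longrightarrow> emeasure lborel (I i) \<noteq> \<infinity>"
    proof -
      fix i
      have "emeasure lborel (I i) \<le> emeasure lborel {t<..t+e}"
        unfolding I_def by (rule emeasure_mono) auto
      also have "\<dots> < \<infinity>" using e by (subst emeasure_lborel_Ioc) auto
      finally show "emeasure lborel (I i) \<noteq> \<infinity>" by simp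
    qed
  qed (auto simp: I_def)
  also have "measure lborel (\<Union>k\<in>{..<n}. I k) \<le> measure lborel {t<..t+e}"
  proof -
    have fin: "emeasure lborel {t<..t+e} < \<infinity>" using e by (subst emeasure_lborel_Ioc) auto
    show ?thesis
      by (rule measure_mono_fmeasurable) (use fin in \<open>auto simp: I_def fmeasurable_def\<close>)
  qed
  also have "\<dots> = e" using e by simp
  finally show ?thesis using e by (simp add: divide_right_mono)
qed

lemma limsup_inf_D:
  assumes "limsup (\<lambda>n. ereal (X n)) = \<infinity>"
  shows "\<exists>n\<ge>N. X n > C"
proof -
  have "(INF N. Sup ((\<lambda>n. ereal (X n)) ` {N..})) = top"
    using assms by (simp add: limsup_INF_SUP top_ereal_def)
  then have "Sup ((\<lambda>n. ereal (X n)) ` {N..}) = top" by (simp add: INF_top_conv)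
  then have A: "\<forall>x<top. \<exists>i\<in>{N..}. x < ereal (X i)" by (simp add: SUP_eq_top_iff)
  obtain i where "i \<in> {N..}" "ereal C < ereal (X i)"
    using A[rule_format, of "ereal C"] by (auto simp: top_ereal_def)
  then show ?thesis by auto
qed

lemma limsup_inf_I:
  assumes "\<And>C N. \<exists>n\<ge>N. X n > C"
  shows "limsup (\<lambda>n. ereal (X n)) = \<infinity>"
proof -
  have S: "Sup ((\<lambda>n. ereal (X n)) ` {N..}) = top" for N
    unfolding SUP_eq_top_iff
  proof (intro allI impI)
    fix x :: ereal assume "x < top"
    then obtain m where "x < ereal (real m)" using less_PInf_Ex_of_nat[of x] by (auto simp: top_ereal_def)
    moreover obtain n where "n \<ge> N" "X n > real m" using assms by blast
    ultimately show "\<exists>i\<in>{N..}. x < ereal (X i)" by (intro bexI[of _ n]) (auto intro: less_trans)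
  qed
  have "limsup (\<lambda>n. ereal (X n)) = (INF N::nat. (top::ereal))"
    unfolding limsup_INF_SUP by (simp only: S)
  then show ?thesis by (simp add: top_ereal_def)
qed

lemma lip_abs_cont:
  assumes "\<And>x y. \<bar>f x - f y\<bar> \<le> L * \<bar>x - y\<bar>"
  shows "abs_cont_on c d f"
  unfolding abs_cont_on_def
proof (intro allI impI)
  fix \<epsilon> :: real assume e: "\<epsilon> > 0"
  have L0: "L \<ge> 0" using assms[of 1 0] by auto
  show "\<exists>\<delta>>0. \<forall>(n::nat) (a::nat \<Rightarrow> real) (b::nat \<Rightarrow> real).
        (\<forall>k<n. c \<le> a k \<and> a k \<le> b k \<and> b k \<le> d) \<and>
        (\<forall>k<n. \<forall>j<n. k \<noteq> j \<longrightarrow> b k \<le> a j \<or> b j \<le> a k) \<and>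
        (\<Sum>k<n. b k - a k) < \<delta>
        \<longrightarrow> (\<Sum>k<n. \<bar>f (b k) - f (a k)\<bar>) < \<epsilon>"
  proof (intro exI[of _ "\<epsilon> / (L + 1)"] conjI allI impI)
    show "\<epsilon> / (L + 1) > 0" using e L0 by simp
    fix n :: nat and a b :: "nat \<Rightarrow> real"
    assume H: "(\<forall>k<n. c \<le> a k \<and> a k \<le> b k \<and> b k \<le> d) \<and>
        (\<forall>k<n. \<forall>j<n. k \<noteq> j \<longrightarrow> b k \<le> a j \<or> b j \<le> a k) \<and>
        (\<Sum>k<n. b k - a k) < \<epsilon> / (L + 1)"
    have "(\<Sum>k<n. \<bar>f (b k) - f (a k)\<bar>) \<le> (\<Sum>k<n. L * (b k - a k))"
    proof (rule sum_mono)
      fix k assume "k \<in> {..<n}"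
      then have "a k \<le> b k" using H by auto
      then show "\<bar>f (b k) - f (a k)\<bar> \<le> L * (b k - a k)" using assms[of "b k" "a k"] by simp
    qed
    also have "\<dots> = L * (\<Sum>k<n. b k - a k)" by (simp add: sum_distrib_left)
    also have "\<dots> \<le> L * (\<epsilon> / (L + 1))" using H L0 by (intro mult_left_mono) auto
    also have "\<dots> < \<epsilon>" using L0 e by (simp add: field_simps)
    finally show "(\<Sum>k<n. \<bar>f (b k) - f (a k)\<bar>) < \<epsilon>" .
  qed
qed

lemma clamp_lip: "\<bar>clampf t e x - clampf t e y\<bar> \<le> \<bar>x - y\<bar>"
  unfolding clampf_def by (simp add: min_def max_def)

lemma Hf_lip:
  assumes "0 < e"
  shows "\<bar>Hf t e x - Hf t e y\<bar> \<le> (1/e) * \<bar>x - y\<bar>"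
proof -
  have "Hf t e x - Hf t e y = (clampf t e y - clampf t e x) / e"
    unfolding Hf_def using assms by (simp add: field_simps)
  then show ?thesis using clamp_lip[of t e y x] assms
    by (simp add: abs_minus_commute divide_right_mono)
qed

lemma Hf_bounds:
  assumes "0 < e"
  shows "0 \<le> Hf t e x" "Hf t e x \<le> 1"
    "x \<le> t \<Longrightarrow> Hf t e x = 1" "t + e \<le> x \<Longrightarrow> Hf t e x = 0"
  using assms by (auto simp: Hf_def clampf_def min_def max_def field_simps)

lemma Hf_meas_borel: "Hf t e \<in> borel_measurable borel"
  unfolding Hf_def clampf_def by measurable

lemma Hf_meas [measurable]: "Hf t e \<in> borel_measurable (lebesgue_on S)"
  using Hf_meas_borel by (simp add: measurable_completion measurable_restrict_space1)

context
  fixes \<phi> :: "nat \<Rightarrow> real \<Rightarrow> real"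
  assumes ons: "orthonormal_system \<phi>"
begin

lemma phi_int: "k \<ge> 1 \<Longrightarrow> integrable (lebesgue_on {0..1}) (\<phi> k)"
proof -
  assume k: "k \<ge> 1"
  have m: "\<phi> k \<in> borel_measurable (lebesgue_on {0..1})" and
       i: "integrable (lebesgue_on {0..1}) (\<lambda>x. \<phi> k x * \<phi> k x)"
    using ons k unfolding orthonormal_system_def by auto
  have "integrable (lebesgue_on {0..1}) (\<lambda>x. 1 + \<phi> k x * \<phi> k x)"
    using i integrable_const_ivl by (intro Bochner_Integration.integrable_add) auto
  then show ?thesis
  proof (rule Bochner_Integration.integrable_bound)
    show "\<phi> k \<in> borel_measurable (lebesgue_on {0..1})" by fact
    show "AE x in lebesgue_on {0..1}. norm (\<phi> k x) \<le> norm (1 + \<phi> k x * \<phi> k x)"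
    proof (intro AE_I2)
      fix x
      have "\<bar>\<phi> k x\<bar> \<le> 1 + \<phi> k x * \<phi> k x"
      proof (cases "\<bar>\<phi> k x\<bar> \<le> 1")
        case True
        then show ?thesis using zero_le_square[of "\<phi> k x"] by linarith
      next
        case False
        then have "\<bar>\<phi> k x\<bar> * 1 \<le> \<bar>\<phi> k x\<bar> * \<bar>\<phi> k x\<bar>" by (intro mult_left_mono) auto
        then have "\<bar>\<phi> k x\<bar> \<le> \<phi> k x * \<phi> k x" by (simp add: abs_mult_self_eq)
        then show ?thesis by linarith
      qed
      then show "norm (\<phi> k x) \<le> norm (1 + \<phi> k x * \<phi> k x)" by simp
    qed
  qed
qed

lemma Q_int: "integrable (lebesgue_on {0..1}) (Qn d b \<phi> n)"
proof -
  have "integrable (lebesgue_on {0..1}) (\<lambda>x. \<Sum>k=1..n. d k * b k * ln (real k) * \<phi> k x)"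
    using phi_int by (intro Bochner_Integration.integrable_sum) auto
  then show ?thesis unfolding Qn_def[abs_def] by simp
qed

end

lemma bdd_mult:
  fixes f q :: "real \<Rightarrow> real"
  assumes q: "integrable (lebesgue_on {0..1}) q"
    and f: "f \<in> borel_measurable (lebesgue_on {0..1})"
    and K: "\<And>x. x \<in> {0..1} \<Longrightarrow> \<bar>f x\<bar> \<le> K"
  shows "integrable (lebesgue_on {0..1}) (\<lambda>x. f x * q x)"
    "\<bar>integral\<^sup>L (lebesgue_on {0..1}) (\<lambda>x. f x * q x)\<bar> \<le> K * integral\<^sup>L (lebesgue_on {0..1}) (\<lambda>x. \<bar>q x\<bar>)"
proof -
  have bm: "q \<in> borel_measurable (lebesgue_on {0..1})" using q by auto
  have iK: "integrable (lebesgue_on {0..1}) (\<lambda>x. K * \<bar>q x\<bar>)"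
    using q by simp
  have pt: "\<bar>f x * q x\<bar> \<le> K * \<bar>q x\<bar>" if "x \<in> space (lebesgue_on {0..1})" for x
    using K[of x] that by (simp add: abs_mult mult_right_mono)
  show i: "integrable (lebesgue_on {0..1}) (\<lambda>x. f x * q x)"
    using iK
  proof (rule Bochner_Integration.integrable_bound)
    show "(\<lambda>x. f x * q x) \<in> borel_measurable (lebesgue_on {0..1})" using f bm by measurable
    show "AE x in lebesgue_on {0..1}. norm (f x * q x) \<le> norm (K * \<bar>q x\<bar>)"
    proof (intro AE_I2)
      fix x :: real assume x: "x \<in> space (lebesgue_on {0..1})"
      have "\<bar>f x * q x\<bar> \<le> K * \<bar>q x\<bar>" by (rule pt[OF x])
      also have "\<dots> \<le> \<bar>K * \<bar>q x\<bar>\<bar>" by (rule abs_ge_self)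
      finally show "norm (f x * q x) \<le> norm (K * \<bar>q x\<bar>)" by simp
    qed
  qed
  have "\<bar>integral\<^sup>L (lebesgue_on {0..1}) (\<lambda>x. f x * q x)\<bar> \<le> integral\<^sup>L (lebesgue_on {0..1}) (\<lambda>x. K * \<bar>q x\<bar>)"
    by (rule integral_abs_bound_integral[OF i iK pt])
  also have "\<dots> = K * integral\<^sup>L (lebesgue_on {0..1}) (\<lambda>x. \<bar>q x\<bar>)" by simp
  finally show "\<bar>integral\<^sup>L (lebesgue_on {0..1}) (\<lambda>x. f x * q x)\<bar> \<le> K * integral\<^sup>L (lebesgue_on {0..1}) (\<lambda>x. \<bar>q x\<bar>)" .
qed


lemma borel_to_leb: "(f::real\<Rightarrow>real) \<in> borel_measurable borel \<Longrightarrow> f \<in> borel_measurable (lebesgue_on S)"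
  by (simp add: measurable_completion measurable_restrict_space1)

lemma ind_meas1 [measurable]: "(\<lambda>x::real. indicator {a<..b} x :: real) \<in> borel_measurable (lebesgue_on S)"
  by (rule borel_to_leb) measurable

lemma ind_meas2 [measurable]: "(\<lambda>x::real. indicator {a..b} x :: real) \<in> borel_measurable (lebesgue_on S)"
  by (rule borel_to_leb) measurable

lemma restrict_int:
  fixes Q :: "real \<Rightarrow> real"
  assumes "t \<le> 1"
  shows "integral\<^sup>L (lebesgue_on {0..t}) Q = integral\<^sup>L (lebesgue_on {0..1}) (\<lambda>x. indicator {0..t} x * Q x)"
proof -
  have "integral\<^sup>L (lebesgue_on {0..t}) Q = integral\<^sup>L lebesgue (\<lambda>x. indicator {0..t} x *\<^sub>R Q x)"
    by (rule integral_restrict_space) simp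
  also have "\<dots> = integral\<^sup>L lebesgue (\<lambda>x. indicator {0..1} x *\<^sub>R (indicator {0..t} x * Q x))"
    using assms by (intro Bochner_Integration.integral_cong) (auto simp: indicator_def)
  also have "\<dots> = integral\<^sup>L (lebesgue_on {0..1}) (\<lambda>x. indicator {0..t} x * Q x)"
    by (rule integral_restrict_space[symmetric]) simp
  finally show ?thesis .
qed

lemma exists_h:
  assumes ons: "orthonormal_system \<phi>" and n: "n \<ge> 2"
  shows "\<exists>t e. 0 \<le> t \<and> t \<le> 1 \<and> 0 < e \<and> \<bar>Un_op d b \<phi> n (Hf t e)\<bar> \<ge> Bn d b \<phi> n - 1"
proof -
  define Q where "Q = Qn d b \<phi> n"
  define \<mu> where "\<mu> = lebesgue_on {0..1::real}"
  have Qi: "integrable \<mu> Q" unfolding Q_def \<mu>_def by (rule Q_int[OF ons])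
  have Qm: "Q \<in> borel_measurable \<mu>" using Qi by auto
  let ?F = "(\<lambda>i. \<bar>integral\<^sup>L (lebesgue_on {0..real i / real n}) (Qn d b \<phi> n)\<bar>)"
  have "Max (?F ` {1..<n}) \<in> ?F ` {1..<n}"
    using n by (intro Max_in) auto
  then obtain i where i: "i \<in> {1..<n}" and Mi: "Max (?F ` {1..<n}) = ?F i"
    by auto
  have Bi: "Bn d b \<phi> n = ?F i" using n Mi unfolding Bn_def by simp
  define t where "t = real i / real n"
  have t0: "0 \<le> t" and t1: "t \<le> 1" using i n unfolding t_def by auto
  have BQ: "Bn d b \<phi> n = \<bar>integral\<^sup>L \<mu> (\<lambda>x. indicator {0..t} x * Q x)\<bar>"
    using Bi restrict_int[OF t1, of Q] unfolding t_def \<mu>_def Q_def by simp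
  define s where "s m x = indicator {t<..t + 1/Suc m} x * \<bar>Q x\<bar>" for m x
  have sm: "s m \<in> borel_measurable \<mu>" for m unfolding s_def \<mu>_def using Qm[unfolded \<mu>_def] by measurable
  have "(\<lambda>m. integral\<^sup>L \<mu> (s m)) \<longlonglongrightarrow> integral\<^sup>L \<mu> (\<lambda>x. 0)"
  proof (rule integral_dominated_convergence[where w = "\<lambda>x. \<bar>Q x\<bar>"])
    show "(\<lambda>x. 0::real) \<in> borel_measurable \<mu>" by simp
    show "\<And>m. s m \<in> borel_measurable \<mu>" by (rule sm)
    show "integrable \<mu> (\<lambda>x. \<bar>Q x\<bar>)" using Qi by simp
    show "\<And>m. AE x in \<mu>. norm (s m x) \<le> \<bar>Q x\<bar>"
      by (intro AE_I2) (auto simp: s_def indicator_def)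
    show "AE x in \<mu>. (\<lambda>m. s m x) \<longlonglongrightarrow> 0"
    proof (intro AE_I2)
      fix x
      show "(\<lambda>m. s m x) \<longlonglongrightarrow> 0"
      proof (cases "x \<le> t")
        case True
        then have "s m x = 0" for m by (simp add: s_def)
        then show ?thesis by simp
      next
        case False
        then obtain M where M: "inverse (real (Suc M)) < x - t"
          using reals_Archimedean[of "x - t"] by auto
        have "eventually (\<lambda>m. s m x = 0) sequentially"
          unfolding eventually_sequentially
        proof (intro exI[of _ M] allI impI)
          fix m assume "M \<le> m"
          then have "1 / real (Suc m) \<le> inverse (real (Suc M))"
            by (simp add: field_simps)
          then have "t + 1 / real (Suc m) < x" using M by linarith
          then show "s m x = 0" by (simp add: s_def)
        qed
        then show ?thesis by (rule tendsto_eventually)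
      qed
    qed
  qed
  then have "eventually (\<lambda>m. integral\<^sup>L \<mu> (s m) < 1) sequentially"
    by (intro order_tendstoD(2)) auto
  then obtain m where sm1: "integral\<^sup>L \<mu> (s m) < 1"
    by (meson eventually_sequentially order_refl)
  define e where "e = 1 / real (Suc m)"
  have e: "0 < e" unfolding e_def by simp
  have Qi': "integrable (lebesgue_on {0..1}) Q" using Qi unfolding \<mu>_def .
  have Qa: "integrable (lebesgue_on {0..1}) (\<lambda>x. \<bar>Q x\<bar>)" using Qi' by simp
  have hb1: "\<bar>Hf t e x - indicator {0..t} x\<bar> \<le> 1" for x
    using Hf_bounds(1,2)[OF e, of t x] by (simp add: indicator_def abs_le_iff)
  have hb2: "\<bar>Hf t e x\<bar> \<le> 1" for x
    using Hf_bounds(1,2)[OF e, of t x] by simp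
  have hb3: "\<bar>indicator A x :: real\<bar> \<le> 1" for A x
    by (simp add: indicator_def)
  have i1: "integrable \<mu> (\<lambda>x. (Hf t e x - indicator {0..t} x) * Q x)"
    unfolding \<mu>_def by (rule bdd_mult(1)[OF Qi' _ hb1]) measurable
  have i2: "integrable \<mu> (s m)"
    unfolding s_def \<mu>_def by (rule bdd_mult(1)[OF Qa _ hb3]) measurable
  have iH: "integrable \<mu> (\<lambda>x. Hf t e x * Q x)"
    unfolding \<mu>_def by (rule bdd_mult(1)[OF Qi' _ hb2]) measurable
  have iI: "integrable \<mu> (\<lambda>x. indicator {0..t} x * Q x)"
    unfolding \<mu>_def by (rule bdd_mult(1)[OF Qi' _ hb3]) measurable
  have pt: "\<bar>(Hf t e x - indicator {0..t} x) * Q x\<bar> \<le> s m x" if xs: "x \<in> space \<mu>" for x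
  proof -
    have x0: "0 \<le> x" using xs by (simp add: \<mu>_def)
    have "\<bar>Hf t e x - indicator {0..t} x\<bar> \<le> indicator {t<..t + e} x"
    proof (cases "x \<le> t")
      case True
      then show ?thesis using x0 Hf_bounds(3)[OF e, of x t] by (auto simp: indicator_def)
    next
      case False
      show ?thesis
      proof (cases "x \<le> t + e")
        case True
        then show ?thesis using False Hf_bounds(1,2)[OF e, of t x] by (auto simp: indicator_def)
      next
        case False2: False
        then show ?thesis using False Hf_bounds(4)[OF e, of t x] by (auto simp: indicator_def)
      qed
    qed
    then show ?thesis unfolding s_def e_def abs_mult by (intro mult_right_mono) auto
  qed
  have "\<bar>Un_op d b \<phi> n (Hf t e) - integral\<^sup>L \<mu> (\<lambda>x. indicator {0..t} x * Q x)\<bar>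
      = \<bar>integral\<^sup>L \<mu> (\<lambda>x. (Hf t e x - indicator {0..t} x) * Q x)\<bar>"
  proof -
    have U: "Un_op d b \<phi> n (Hf t e) = integral\<^sup>L \<mu> (\<lambda>x. Hf t e x * Q x)"
      by (simp add: Un_op_def Q_def \<mu>_def)
    have D: "integral\<^sup>L \<mu> (\<lambda>x. (Hf t e x - indicator {0..t} x) * Q x)
        = integral\<^sup>L \<mu> (\<lambda>x. Hf t e x * Q x) - integral\<^sup>L \<mu> (\<lambda>x. indicator {0..t} x * Q x)"
      unfolding left_diff_distrib by (rule Bochner_Integration.integral_diff[OF iH iI])
    show ?thesis unfolding U D ..
  qed
  also have "\<dots> \<le> integral\<^sup>L \<mu> (s m)"
    by (rule integral_abs_bound_integral[OF i1 i2 pt])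
  finally have "\<bar>Un_op d b \<phi> n (Hf t e) - integral\<^sup>L \<mu> (\<lambda>x. indicator {0..t} x * Q x)\<bar> < 1"
    using sm1 by linarith
  then have "\<bar>Un_op d b \<phi> n (Hf t e)\<bar> \<ge> Bn d b \<phi> n - 1" unfolding BQ by linarith
  then show ?thesis using t0 t1 e by blast
qed




lemma geo_sum: "(\<lambda>i. (1/2::real)^Suc (i + J)) sums ((1/2)^J)"
proof -
  have "(\<lambda>i. (1/2::real)^Suc J * (1/2)^i) sums ((1/2)^Suc J * (1 / (1 - 1/2)))"
    by (intro sums_mult geometric_sums) simp
  moreover have "(\<lambda>i. (1/2::real)^Suc J * (1/2)^i) = (\<lambda>i. (1/2::real)^Suc (i + J))"
    by (simp add: power_add mult.commute)
  ultimately show ?thesis by simp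
qed

lemma summ_half:
  fixes f :: "nat \<Rightarrow> real"
  assumes "\<And>i. \<bar>f i\<bar> \<le> (1/2)^Suc (i + J)"
  shows "summable f"
  using assms geo_sum[of J] by (intro summable_comparison_test[of f "\<lambda>i. (1/2::real)^Suc (i + J)"]) (auto simp: sums_iff)

lemma lip_sum:
  assumes E: "\<And>i. i < J \<Longrightarrow> 0 < E i" and A: "\<And>i. i < J \<Longrightarrow> 0 \<le> A i"
  shows "\<bar>(\<Sum>i<J. A i * Hf (T i) (E i) y) - (\<Sum>i<J. A i * Hf (T i) (E i) x)\<bar>
    \<le> (\<Sum>i<J. A i / E i) * \<bar>y - x\<bar>"
proof -
  have "\<bar>(\<Sum>i<J. A i * Hf (T i) (E i) y) - (\<Sum>i<J. A i * Hf (T i) (E i) x)\<bar>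
      = \<bar>\<Sum>i<J. A i * (Hf (T i) (E i) y - Hf (T i) (E i) x)\<bar>"
    by (simp add: sum_subtractf[symmetric] right_diff_distrib)
  also have "\<dots> \<le> (\<Sum>i<J. \<bar>A i * (Hf (T i) (E i) y - Hf (T i) (E i) x)\<bar>)" by (rule sum_abs)
  also have "\<dots> \<le> (\<Sum>i<J. A i / E i * \<bar>y - x\<bar>)"
  proof (rule sum_mono)
    fix i assume "i \<in> {..<J}"
    then have iJ: "i < J" by simp
    have "\<bar>A i * (Hf (T i) (E i) y - Hf (T i) (E i) x)\<bar> = A i * \<bar>Hf (T i) (E i) y - Hf (T i) (E i) x\<bar>"
      using A[OF iJ] by (simp add: abs_mult)
    also have "\<dots> \<le> A i * ((1 / E i) * \<bar>y - x\<bar>)"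
      using Hf_lip[OF E[OF iJ], of "T i" y x] A[OF iJ] by (intro mult_left_mono) auto
    finally show "\<bar>A i * (Hf (T i) (E i) y - Hf (T i) (E i) x)\<bar> \<le> A i / E i * \<bar>y - x\<bar>" by simp
  qed
  also have "\<dots> = (\<Sum>i<J. A i / E i) * \<bar>y - x\<bar>" by (simp add: sum_distrib_right)
  finally show ?thesis .
qed

lemma ac_series:
  fixes A E T :: "nat \<Rightarrow> real"
  assumes A0: "\<And>i. 0 \<le> A i" and A1: "\<And>i. A i \<le> (1/2)^Suc i" and E: "\<And>i. 0 < E i"
  shows "abs_cont_on 0 1 (\<lambda>x. \<Sum>i. A i * Hf (T i) (E i) x)"
  unfolding abs_cont_on_def
proof (intro allI impI)
  define G where "G i = Hf (T i) (E i)" for i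
  define g where "g x = (\<Sum>i. A i * G i x)" for x
  have Gb: "0 \<le> G i x" "G i x \<le> 1" for i x using Hf_bounds(1,2)[OF E[of i]] by (auto simp: G_def)
  have dG: "\<bar>G i y - G i x\<bar> \<le> 1" for i x y using Gb[of i x] Gb[of i y] by (simp add: abs_le_iff)
  fix \<epsilon> :: real assume ep: "\<epsilon> > 0"
  obtain J where J: "(1/2::real)^J < \<epsilon>/2" using real_arch_pow_inv[of "\<epsilon>/2" "1/2"] ep by auto
  define Lc where "Lc = (\<Sum>i<J. A i / E i)"
  have Lc0: "0 \<le> Lc" unfolding Lc_def using A0 E by (intro sum_nonneg) (auto intro: divide_nonneg_pos)
  define \<delta> where "\<delta> = \<epsilon> / (2 * (Lc + 1))"
  have PB: "\<bar>g y - g x\<bar> \<le> Lc * (y - x) + (\<Sum>i. A (i + J) * \<bar>G (i + J) y - G (i + J) x\<bar>)"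
    if xy: "x \<le> y" for x y
  proof -
    define D where "D i = A i * (G i y - G i x)" for i
    have Db: "\<bar>D i\<bar> \<le> (1/2)^Suc (i + 0)" for i
    proof -
      have "\<bar>D i\<bar> = A i * \<bar>G i y - G i x\<bar>" using A0[of i] by (simp add: D_def abs_mult)
      also have "\<dots> \<le> A i * 1" using A0[of i] dG by (intro mult_left_mono) auto
      finally show ?thesis using A1[of i] by simp
    qed
    have sD: "summable D" by (rule summ_half[OF Db])
    have AG: "\<bar>A i * G i z\<bar> \<le> (1/2)^Suc (i + 0)" for i z
    proof -
      have "\<bar>A i * G i z\<bar> = A i * G i z" using A0[of i] Gb[of i z] by (simp add: abs_mult)
      also have "\<dots> \<le> A i * 1" using A0[of i] Gb[of i z] by (intro mult_left_mono) auto
      finally show ?thesis using A1[of i] by simp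
    qed
    have sy: "summable (\<lambda>i. A i * G i y)" by (rule summ_half[OF AG])
    have sx: "summable (\<lambda>i. A i * G i x)" by (rule summ_half[OF AG])
    have "g y - g x = suminf D" unfolding g_def D_def using suminf_diff[OF sy sx] by (simp add: right_diff_distrib)
    also have "\<dots> = (\<Sum>i. D (i + J)) + (\<Sum>i<J. D i)" by (rule suminf_split_initial_segment[OF sD])
    finally have eq: "g y - g x = (\<Sum>i. D (i + J)) + (\<Sum>i<J. D i)" .
    have sDJ: "summable (\<lambda>i. \<bar>D (i + J)\<bar>)"
    proof (rule summ_half[of _ J])
      fix i show "\<bar>\<bar>D (i + J)\<bar>\<bar> \<le> (1/2)^Suc (i + J)" using Db[of "i + J"] by simp
    qed
    have "\<bar>\<Sum>i. D (i + J)\<bar> \<le> (\<Sum>i. \<bar>D (i + J)\<bar>)"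
      using summable_norm[of "\<lambda>i. D (i + J)"] sDJ by simp
    also have "\<dots> = (\<Sum>i. A (i + J) * \<bar>G (i + J) y - G (i + J) x\<bar>)"
      using A0 by (simp add: D_def abs_mult)
    finally have t1: "\<bar>\<Sum>i. D (i + J)\<bar> \<le> (\<Sum>i. A (i + J) * \<bar>G (i + J) y - G (i + J) x\<bar>)" .
    have "\<bar>\<Sum>i<J. D i\<bar> = \<bar>(\<Sum>i<J. A i * Hf (T i) (E i) y) - (\<Sum>i<J. A i * Hf (T i) (E i) x)\<bar>"
      by (simp add: D_def G_def sum_subtractf[symmetric] right_diff_distrib)
    also have "\<dots> \<le> Lc * \<bar>y - x\<bar>" unfolding Lc_def by (rule lip_sum[OF E A0])
    finally have t2: "\<bar>\<Sum>i<J. D i\<bar> \<le> Lc * (y - x)" using xy by simp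
    show ?thesis unfolding eq using t1 t2 by linarith
  qed
  show "\<exists>\<delta>>0. \<forall>(n::nat) (a::nat \<Rightarrow> real) (b::nat \<Rightarrow> real).
        (\<forall>k<n. 0 \<le> a k \<and> a k \<le> b k \<and> b k \<le> 1) \<and>
        (\<forall>k<n. \<forall>j<n. k \<noteq> j \<longrightarrow> b k \<le> a j \<or> b j \<le> a k) \<and>
        (\<Sum>k<n. b k - a k) < \<delta>
        \<longrightarrow> (\<Sum>k<n. \<bar>(\<Sum>i. A i * Hf (T i) (E i) (b k)) - (\<Sum>i. A i * Hf (T i) (E i) (a k))\<bar>) < \<epsilon>"
  proof (intro exI[of _ \<delta>] conjI allI impI)
    show "\<delta> > 0" unfolding \<delta>_def using ep Lc0 by simp
    fix n :: nat and a b :: "nat \<Rightarrow> real"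
    assume H: "(\<forall>k<n. 0 \<le> a k \<and> a k \<le> b k \<and> b k \<le> 1) \<and>
        (\<forall>k<n. \<forall>j<n. k \<noteq> j \<longrightarrow> b k \<le> a j \<or> b j \<le> a k) \<and>
        (\<Sum>k<n. b k - a k) < \<delta>"
    define W where "W k i = A (i + J) * \<bar>G (i + J) (b k) - G (i + J) (a k)\<bar>" for k i
    have Wb: "\<bar>W k i\<bar> \<le> (1/2)^Suc (i + J)" for k i
    proof -
      have "\<bar>W k i\<bar> = W k i" using A0[of "i+J"] by (simp add: W_def abs_mult)
      also have "\<dots> \<le> A (i + J) * 1" unfolding W_def using A0[of "i+J"] dG by (intro mult_left_mono) auto
      finally show ?thesis using A1[of "i+J"] by simp
    qed
    have sW: "summable (W k)" for k by (rule summ_half[OF Wb])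
    have "(\<Sum>k<n. \<bar>g (b k) - g (a k)\<bar>) \<le> (\<Sum>k<n. Lc * (b k - a k) + suminf (W k))"
      using H PB unfolding W_def by (intro sum_mono) auto
    also have "\<dots> = Lc * (\<Sum>k<n. b k - a k) + (\<Sum>k<n. suminf (W k))"
      by (simp add: sum.distrib sum_distrib_left)
    also have "(\<Sum>k<n. suminf (W k)) = (\<Sum>i. \<Sum>k<n. W k i)"
      using sW by (rule suminf_sum[symmetric])
    also have "\<dots> \<le> (\<Sum>i. (1/2::real)^Suc (i + J))"
    proof (rule suminf_le)
      fix i
      have "(\<Sum>k<n. W k i) = A (i + J) * (\<Sum>k<n. \<bar>Hf (T (i+J)) (E (i+J)) (b k) - Hf (T (i+J)) (E (i+J)) (a k)\<bar>)"
        by (simp add: W_def G_def sum_distrib_left)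
      also have "\<dots> \<le> A (i + J) * 1"
        using H A0 by (intro mult_left_mono var_bound E) auto
      also have "\<dots> \<le> (1/2)^Suc (i + J)" using A1[of "i + J"] by simp
      finally show "(\<Sum>k<n. W k i) \<le> (1/2)^Suc (i + J)" .
    next
      show "summable (\<lambda>i. \<Sum>k<n. W k i)" using sW by (intro summable_sum) auto
      show "summable (\<lambda>i. (1/2::real)^Suc (i + J))" using geo_sum by (rule sums_summable)
    qed
    also have "(\<Sum>i. (1/2::real)^Suc (i + J)) = (1/2)^J" using geo_sum by (rule sums_unique[symmetric])
    finally have S1: "(\<Sum>k<n. \<bar>g (b k) - g (a k)\<bar>) \<le> Lc * (\<Sum>k<n. b k - a k) + (1/2)^J" by simp
    have "Lc * (\<Sum>k<n. b k - a k) \<le> Lc * \<delta>" using H Lc0 by (intro mult_left_mono) auto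
    also have "Lc * \<delta> \<le> \<epsilon> / 2" unfolding \<delta>_def using Lc0 ep by (simp add: field_simps)
    finally have "(\<Sum>k<n. \<bar>g (b k) - g (a k)\<bar>) < \<epsilon>" using S1 J by linarith
    then show "(\<Sum>k<n. \<bar>(\<Sum>i. A i * Hf (T i) (E i) (b k)) - (\<Sum>i. A i * Hf (T i) (E i) (a k))\<bar>) < \<epsilon>"
      by (simp add: g_def G_def)
  qed
qed



lemma ne_inf: "(x::ereal) \<noteq> \<infinity> \<Longrightarrow> x < \<infinity>"
  by (cases x) auto

lemma U_split3:
  fixes f1 f2 f3 :: "real \<Rightarrow> real"
  assumes ons: "orthonormal_system \<phi>"
    and m1: "f1 \<in> borel_measurable (lebesgue_on {0..1})" and b1: "\<And>x. x \<in> {0..1} \<Longrightarrow> \<bar>f1 x\<bar> \<le> K1"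
    and m2: "f2 \<in> borel_measurable (lebesgue_on {0..1})" and b2: "\<And>x. x \<in> {0..1} \<Longrightarrow> \<bar>f2 x\<bar> \<le> K2"
    and m3: "f3 \<in> borel_measurable (lebesgue_on {0..1})" and b3: "\<And>x. x \<in> {0..1} \<Longrightarrow> \<bar>f3 x\<bar> \<le> K3"
  shows "Un_op d b \<phi> n (\<lambda>x. f1 x + f2 x + c * f3 x) = Un_op d b \<phi> n f1 + Un_op d b \<phi> n f2 + c * Un_op d b \<phi> n f3"
proof -
  define Q where "Q = Qn d b \<phi> n"
  have Qi: "integrable (lebesgue_on {0..1}) Q" unfolding Q_def by (rule Q_int[OF ons])
  have i1: "integrable (lebesgue_on {0..1}) (\<lambda>x. f1 x * Q x)" by (rule bdd_mult(1)[OF Qi m1 b1])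
  have i2: "integrable (lebesgue_on {0..1}) (\<lambda>x. f2 x * Q x)" by (rule bdd_mult(1)[OF Qi m2 b2])
  have i3: "integrable (lebesgue_on {0..1}) (\<lambda>x. f3 x * Q x)" by (rule bdd_mult(1)[OF Qi m3 b3])
  have eq: "(\<lambda>x. (f1 x + f2 x + c * f3 x) * Q x) = (\<lambda>x. (f1 x * Q x + f2 x * Q x) + c * (f3 x * Q x))"
    by (rule ext) (simp add: algebra_simps)
  have "Un_op d b \<phi> n (\<lambda>x. f1 x + f2 x + c * f3 x)
      = integral\<^sup>L (lebesgue_on {0..1}) (\<lambda>x. (f1 x * Q x + f2 x * Q x) + c * (f3 x * Q x))"
    unfolding Un_op_def Q_def[symmetric] eq ..
  also have "\<dots> = integral\<^sup>L (lebesgue_on {0..1}) (\<lambda>x. f1 x * Q x + f2 x * Q x)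
      + integral\<^sup>L (lebesgue_on {0..1}) (\<lambda>x. c * (f3 x * Q x))"
    by (rule Bochner_Integration.integral_add) (use i1 i2 i3 in auto)
  also have "integral\<^sup>L (lebesgue_on {0..1}) (\<lambda>x. f1 x * Q x + f2 x * Q x)
      = integral\<^sup>L (lebesgue_on {0..1}) (\<lambda>x. f1 x * Q x) + integral\<^sup>L (lebesgue_on {0..1}) (\<lambda>x. f2 x * Q x)"
    by (rule Bochner_Integration.integral_add[OF i1 i2])
  also have "integral\<^sup>L (lebesgue_on {0..1}) (\<lambda>x. c * (f3 x * Q x)) = c * integral\<^sup>L (lebesgue_on {0..1}) (\<lambda>x. f3 x * Q x)"
    by simp
  finally show ?thesis unfolding Un_op_def Q_def .
qed

lemma main_contra:
  fixes \<phi> :: "nat \<Rightarrow> real \<Rightarrow> real" and d b :: "nat \<Rightarrow> real"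
  assumes ons: "orthonormal_system \<phi>"
    and Binf: "limsup (\<lambda>n. ereal (Bn d b \<phi> n)) = \<infinity>"
    and H: "\<And>g. abs_cont_on 0 1 g \<Longrightarrow> limsup (\<lambda>n. ereal \<bar>Un_op d b \<phi> n g\<bar>) \<noteq> \<infinity>"
  shows False
proof -
  define L where "L n = integral\<^sup>L (lebesgue_on {0..1}) (\<lambda>x. \<bar>Qn d b \<phi> n x\<bar>)" for n
  have L0: "0 \<le> L n" for n unfolding L_def by (rule Bochner_Integration.integral_nonneg_AE) auto
  have F1: "\<exists>M. \<forall>n. \<bar>Un_op d b \<phi> n f\<bar> \<le> M" if lip: "\<And>x y. \<bar>f x - f y\<bar> \<le> K * \<bar>x - y\<bar>" for f K
  proof -
    have "abs_cont_on 0 1 f" by (rule lip_abs_cont[OF lip])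
    then have "limsup (\<lambda>n. ereal \<bar>Un_op d b \<phi> n f\<bar>) \<noteq> \<infinity>" by (rule H)
    then have "limsup (\<lambda>n. ereal \<bar>Un_op d b \<phi> n f\<bar>) < \<infinity>" by (rule ne_inf)
    then show ?thesis by (rule limsup_finite_then_bounded)
  qed
  define nsel where "nsel S a j = (SOME n::nat. 2 \<le> n \<and> j \<le> n \<and>
     real j \<le> a * (Bn d b \<phi> n - 1) - \<bar>Un_op d b \<phi> n S\<bar> - 1)" for S :: "real \<Rightarrow> real" and a :: real and j :: nat
  define hsel where "hsel n = (SOME p::real\<times>real. 0 \<le> fst p \<and> fst p \<le> 1 \<and> 0 < snd p \<and>
     Bn d b \<phi> n - 1 \<le> \<bar>Un_op d b \<phi> n (Hf (fst p) (snd p))\<bar>)" for n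
  define stp where "stp j p = ((\<lambda>x. fst p x + ((1/2::real)^Suc j / snd p) *
      Hf (fst (hsel (nsel (fst p) ((1/2::real)^Suc j / snd p) j)))
         (snd (hsel (nsel (fst p) ((1/2::real)^Suc j / snd p) j))) x),
      max (snd p) (1 + L (nsel (fst p) ((1/2::real)^Suc j / snd p) j)))"
    for j and p :: "(real \<Rightarrow> real) \<times> real"
  define st where "st = rec_nat ((\<lambda>x::real. 0::real), 1::real) stp"
  define A where "A j = (1/2::real)^Suc j / snd (st j)" for j
  define N where "N j = nsel (fst (st j)) (A j) j" for j
  define T where "T j = fst (hsel (N j))" for j
  define E where "E j = snd (hsel (N j))" for j
  have st0: "st 0 = ((\<lambda>x. 0), 1)" unfolding st_def by simp
  have stS: "st (Suc j) = ((\<lambda>x. fst (st j) x + A j * Hf (T j) (E j) x), max (snd (st j)) (1 + L (N j)))" for j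
    unfolding A_def N_def T_def E_def by (simp add: st_def stp_def)
  have S_eq: "fst (st j) = (\<lambda>x. \<Sum>i<j. A i * Hf (T i) (E i) x)" for j
    by (induction j) (simp_all add: st0 stS)
  have P1: "1 \<le> snd (st j)" for j
    by (induction j) (simp_all add: st0 stS le_max_iff_disj)
  have Pinc: "snd (st j) \<le> snd (st (Suc j))" for j by (simp add: stS)
  have Pmono: "snd (st i) \<le> snd (st j)" if "i \<le> j" for i j
    by (rule lift_Suc_mono_le[of "\<lambda>j. snd (st j)", OF Pinc that])
  have PL: "1 + L (N i) \<le> snd (st j)" if "i < j" for i j
  proof -
    have "1 + L (N i) \<le> snd (st (Suc i))" by (simp add: stS)
    also have "\<dots> \<le> snd (st j)" using that by (intro Pmono) simp
    finally show ?thesis .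
  qed
  have Apos: "0 < A j" for j using P1[of j] by (simp add: A_def)
  have A1: "A j \<le> (1/2)^Suc j" for j
  proof -
    have "(1/2::real)^Suc j / snd (st j) \<le> (1/2)^Suc j / 1" using P1[of j] by (intro divide_left_mono) auto
    then show ?thesis by (simp add: A_def)
  qed
  have AL: "A m \<le> (1/2)^Suc m / (1 + L (N j))" if "j < m" for j m
    unfolding A_def using PL[OF that] L0[of "N j"] by (intro divide_left_mono) auto
  have hkey: "0 \<le> T j \<and> T j \<le> 1 \<and> 0 < E j \<and> Bn d b \<phi> (N j) - 1 \<le> \<bar>Un_op d b \<phi> (N j) (Hf (T j) (E j))\<bar>"
    if N2: "2 \<le> N j" for j
  proof -
    obtain t e where te: "0 \<le> t \<and> t \<le> 1 \<and> 0 < e \<and> \<bar>Un_op d b \<phi> (N j) (Hf t e)\<bar> \<ge> Bn d b \<phi> (N j) - 1"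
      using exists_h[OF ons N2] by blast
    then have ex: "\<exists>p::real\<times>real. 0 \<le> fst p \<and> fst p \<le> 1 \<and> 0 < snd p \<and>
        Bn d b \<phi> (N j) - 1 \<le> \<bar>Un_op d b \<phi> (N j) (Hf (fst p) (snd p))\<bar>"
      by (intro exI[of _ "(t,e)"]) auto
    show ?thesis unfolding T_def E_def hsel_def by (rule someI_ex[OF ex])
  qed
  have key: "2 \<le> N j \<and> j \<le> N j \<and> real j \<le> A j * (Bn d b \<phi> (N j) - 1) - \<bar>Un_op d b \<phi> (N j) (fst (st j))\<bar> - 1"
    if Ep: "\<And>i. i < j \<Longrightarrow> 0 < E i" for j
  proof -
    have lip: "\<bar>fst (st j) x - fst (st j) y\<bar> \<le> (\<Sum>i<j. A i / E i) * \<bar>x - y\<bar>" for x y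
      unfolding S_eq using lip_sum[where J=j and E=E and A=A and T=T and y=x and x=y] Ep Apos
      by (simp add: less_imp_le)
    obtain M where M: "\<forall>n. \<bar>Un_op d b \<phi> n (fst (st j))\<bar> \<le> M" using F1[OF lip] by blast
    obtain n where n: "max 2 j \<le> n" "(M + 1 + real j) / A j + 1 < Bn d b \<phi> n"
      using limsup_inf_D[OF Binf] by blast
    have "(M + 1 + real j) / A j < Bn d b \<phi> n - 1" using n(2) by linarith
    then have "M + 1 + real j < (Bn d b \<phi> n - 1) * A j" using Apos[of j] by (simp add: pos_divide_less_eq)
    then have "2 \<le> n \<and> j \<le> n \<and> real j \<le> A j * (Bn d b \<phi> n - 1) - \<bar>Un_op d b \<phi> n (fst (st j))\<bar> - 1"
      using n(1) M[rule_format, of n] by (auto simp: mult.commute)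
    then have ex: "\<exists>n. 2 \<le> n \<and> j \<le> n \<and> real j \<le> A j * (Bn d b \<phi> n - 1) - \<bar>Un_op d b \<phi> n (fst (st j))\<bar> - 1"
      by blast
    show ?thesis unfolding N_def nsel_def by (rule someI_ex[OF ex])
  qed
  have Epos: "0 < E j" for j
  proof (induction j rule: less_induct)
    case (less j)
    then have "2 \<le> N j" using key by blast
    then show ?case using hkey by blast
  qed
  have keyj: "2 \<le> N j \<and> j \<le> N j \<and> real j \<le> A j * (Bn d b \<phi> (N j) - 1) - \<bar>Un_op d b \<phi> (N j) (fst (st j))\<bar> - 1" for j
    using key Epos by blast
  have hkeyj: "Bn d b \<phi> (N j) - 1 \<le> \<bar>Un_op d b \<phi> (N j) (Hf (T j) (E j))\<bar>" for j
    using hkey keyj by blast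
  define G where "G i = Hf (T i) (E i)" for i
  define g where "g x = (\<Sum>i. A i * G i x)" for x
  have gAC: "abs_cont_on 0 1 g" unfolding g_def G_def
    by (rule ac_series) (use Apos A1 Epos in \<open>auto intro: less_imp_le\<close>)
  have Gb: "0 \<le> G i x" "G i x \<le> 1" for i x using Hf_bounds(1,2)[OF Epos[of i]] by (auto simp: G_def)
  have Gm: "G i \<in> borel_measurable (lebesgue_on {0..1})" for i unfolding G_def by (rule Hf_meas)
  have big: "real j \<le> \<bar>Un_op d b \<phi> (N j) g\<bar>" for j
  proof -
    define n where "n = N j"
    define S where "S = fst (st j)"
    define R where "R x = (\<Sum>i. A (i + Suc j) * G (i + Suc j) x)" for x
    have AG: "\<bar>A i * G i z\<bar> \<le> (1/2)^Suc (i + 0)" for i z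
    proof -
      have "\<bar>A i * G i z\<bar> = A i * G i z" using Apos[of i] Gb[of i z] by (simp add: abs_mult)
      also have "\<dots> \<le> A i * 1" using Apos[of i] Gb[of i z] by (intro mult_left_mono) auto
      finally show ?thesis using A1[of i] by simp
    qed
    have sg: "summable (\<lambda>i. A i * G i x)" for x by (rule summ_half[OF AG])
    have gsplit: "g x = R x + S x + A j * G j x" for x
    proof -
      have "g x = (\<Sum>i. A (i + Suc j) * G (i + Suc j) x) + (\<Sum>i<Suc j. A i * G i x)"
        unfolding g_def by (rule suminf_split_initial_segment[OF sg])
      then show ?thesis by (simp add: R_def S_def S_eq G_def)
    qed
    have Rb: "\<bar>R x\<bar> \<le> 1 / (1 + L n)" for x
    proof -
      have sums: "(\<lambda>i. (1/2::real)^Suc (i + Suc j) / (1 + L n)) sums ((1/2)^Suc j / (1 + L n))"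
        by (rule sums_divide[OF geo_sum])
      have "norm (R x) \<le> (\<Sum>i. (1/2::real)^Suc (i + Suc j) / (1 + L n))"
        unfolding R_def
      proof (rule norm_suminf_le)
        fix i
        have "norm (A (i + Suc j) * G (i + Suc j) x) = A (i + Suc j) * G (i + Suc j) x"
          using Apos[of "i + Suc j"] Gb[of "i + Suc j" x] by (simp add: abs_mult)
        also have "\<dots> \<le> A (i + Suc j) * 1"
          using Apos[of "i + Suc j"] Gb[of "i + Suc j" x] by (intro mult_left_mono) auto
        also have "\<dots> \<le> (1/2)^Suc (i + Suc j) / (1 + L n)" using AL[of j "i + Suc j"] by (simp add: n_def)
        finally show "norm (A (i + Suc j) * G (i + Suc j) x) \<le> (1/2)^Suc (i + Suc j) / (1 + L n)" .
      next
        show "summable (\<lambda>i. (1/2::real)^Suc (i + Suc j) / (1 + L n))" using sums by (rule sums_summable)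
      qed
      also have "\<dots> = (1/2)^Suc j / (1 + L n)" using sums by (rule sums_unique[symmetric])
      also have "\<dots> \<le> 1 / (1 + L n)"
      proof -
        have "(1/2::real)^Suc j \<le> 1" by (rule power_le_one) auto
        then show ?thesis using L0[of n] by (intro divide_right_mono) auto
      qed
      finally show ?thesis by simp
    qed
    have Rm: "R \<in> borel_measurable (lebesgue_on {0..1})" unfolding R_def G_def by measurable
    have Sm: "S \<in> borel_measurable (lebesgue_on {0..1})" unfolding S_def S_eq by measurable
    have Sb: "\<bar>S x\<bar> \<le> (\<Sum>i<j. A i)" for x
    proof -
      have "\<bar>S x\<bar> \<le> (\<Sum>i<j. \<bar>A i * G i x\<bar>)" unfolding S_def S_eq G_def by (rule sum_abs)
      also have "\<dots> \<le> (\<Sum>i<j. A i)"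
      proof (rule sum_mono)
        fix i
        have "\<bar>A i * G i x\<bar> = A i * G i x" using Apos[of i] Gb[of i x] by (simp add: abs_mult)
        also have "\<dots> \<le> A i * 1" using Apos[of i] Gb[of i x] by (intro mult_left_mono) auto
        finally show "\<bar>A i * G i x\<bar> \<le> A i" by simp
      qed
      finally show ?thesis .
    qed
    have Gb': "\<bar>G j x\<bar> \<le> 1" for x using Gb[of j x] by simp
    have geq: "g = (\<lambda>x. R x + S x + A j * G j x)" by (rule ext) (rule gsplit)
    have Ug: "Un_op d b \<phi> n g = Un_op d b \<phi> n R + Un_op d b \<phi> n S + A j * Un_op d b \<phi> n (G j)"
      unfolding geq by (rule U_split3[OF ons Rm Rb Sm Sb Gm Gb'])
    have URb: "\<bar>Un_op d b \<phi> n R\<bar> \<le> 1"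
    proof -
      have "\<bar>Un_op d b \<phi> n R\<bar> \<le> (1 / (1 + L n)) * L n"
        using bdd_mult(2)[OF Q_int[OF ons] Rm Rb] by (simp add: Un_op_def L_def)
      also have "\<dots> \<le> 1" using L0[of n] by (simp add: field_simps)
      finally show ?thesis .
    qed
    have k1: "real j \<le> A j * (Bn d b \<phi> n - 1) - \<bar>Un_op d b \<phi> n S\<bar> - 1"
      using keyj[of j] by (simp add: n_def S_def)
    have k2: "A j * (Bn d b \<phi> n - 1) \<le> A j * \<bar>Un_op d b \<phi> n (G j)\<bar>"
      using hkeyj[of j] Apos[of j] by (intro mult_left_mono) (auto simp: n_def G_def)
    have k3: "\<bar>A j * Un_op d b \<phi> n (G j)\<bar> = A j * \<bar>Un_op d b \<phi> n (G j)\<bar>"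
      using Apos[of j] by (simp add: abs_mult)
    have "real j \<le> \<bar>Un_op d b \<phi> n g\<bar>" unfolding Ug using k1 k2 k3 URb by linarith
    then show ?thesis by (simp add: n_def)
  qed
  have "limsup (\<lambda>n. ereal \<bar>Un_op d b \<phi> n g\<bar>) = \<infinity>"
  proof (rule limsup_inf_I)
    fix C :: real and N0 :: nat
    define j where "j = max N0 (nat \<lceil>C\<rceil> + 1)"
    have "N0 \<le> j" by (simp add: j_def)
    then have "N0 \<le> N j" using keyj[of j] by linarith
    moreover have "C < real j"
    proof -
      have c1: "C \<le> real (nat \<lceil>C\<rceil>)" by (rule real_nat_ceiling_ge)
      have "nat \<lceil>C\<rceil> + 1 \<le> j" by (simp add: j_def)
      then have "real (nat \<lceil>C\<rceil> + 1) \<le> real j" by (simp only: of_nat_le_iff)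
      then show ?thesis using c1 by simp
    qed
    then have "C < \<bar>Un_op d b \<phi> (N j) g\<bar>" using big[of j] by linarith
    ultimately show "\<exists>n\<ge>N0. \<bar>Un_op d b \<phi> n g\<bar> > C" by blast
  qed
  with H[OF gAC] show False by simp
qed


theorem theorem2:
  fixes \<phi> :: "nat \<Rightarrow> real \<Rightarrow> real" and d b :: "nat \<Rightarrow> real"
  assumes "orthonormal_system \<phi>"
    and "\<exists>C. \<forall>n\<ge>1. \<bar>d n\<bar> \<le> C * sqrt (real n) / (ln (real n + 1))\<^sup>2"
    and "summable (\<lambda>n. (b n)\<^sup>2)"
    and "limsup (\<lambda>n. ereal (Bn d b \<phi> n)) = \<infinity>"
  shows "\<exists>g. abs_cont_on 0 1 g \<and> limsup (\<lambda>n. ereal \<bar>Un_op d b \<phi> n g\<bar>) = \<infinity>"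
proof (rule ccontr)
  assume nc: "\<not> (\<exists>g. abs_cont_on 0 1 g \<and> limsup (\<lambda>n. ereal \<bar>Un_op d b \<phi> n g\<bar>) = \<infinity>)"
  have "\<And>g. abs_cont_on 0 1 g \<Longrightarrow> limsup (\<lambda>n. ereal \<bar>Un_op d b \<phi> n g\<bar>) \<noteq> \<infinity>"
    using nc by blast
  then show False by (rule main_contra[OF assms(1) assms(4)])
qed

end
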